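(* Let $F$ be a compact metric space, $Y$ a normed space, and $S\colon F\to Y$ a continuous mapping. Then for every $n\in\mathbb{N}$, \[ \delta_n(S)\le 2\, e_n^{\mathrm{cont\text{-}non}}(S). \]
   Context: $e_n^{\mathrm{cont\text{-}non}}(S):=\inf\{\sup_{f\in F}\|S(f)-\Phi(N(f))\|_Y : N\colon F\to\mathbb{R}^n\text{ continuous},\ \Phi\colon\mathbb{R}^n\to Y\text{ arbitrary}\}$. The manifold widths are $\delta_n(S):=\inf\{\sup_{f\in F}\|S(f)-\Phi(N(f))\|_Y : N\colon F\to\mathbb{R}^n \text{ continuous},\ \Phi\colon\mathbb{R}^n\to Y\text{ continuous}\}$. *)

theory Defs
  imports "HOL-Analysis.Analysis"
begin

text \<open>R^n is modelled as the subspace of nat \<Rightarrow> real (product topology) of vectors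
  supported in {0..<n}; on this subspace the product topology is the Euclidean one.\<close>

definition Rn :: "nat \<Rightarrow> (nat \<Rightarrow> real) set" where
  "Rn n = {x. \<forall>i\<ge>n. x i = 0}"

text \<open>Worst-case error of the algorithm Phi o N; values in ennreal (Sup of empty set is 0,
  unbounded errors give infinity).\<close>
definition wc_err :: "'a set \<Rightarrow> ('a \<Rightarrow> 'b::real_normed_vector) \<Rightarrow> ('a \<Rightarrow> nat \<Rightarrow> real)
    \<Rightarrow> ((nat \<Rightarrow> real) \<Rightarrow> 'b) \<Rightarrow> ennreal" where
  "wc_err F S N Phi = (SUP f\<in>F. ennreal (norm (S f - Phi (N f))))"

definition e_cont_non :: "nat \<Rightarrow> 'a::topological_space set \<Rightarrow> ('a \<Rightarrow> 'b::real_normed_vector) \<Rightarrow> ennreal" where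
  "e_cont_non n F S = (INF (N, Phi) \<in> {(N, Phi). continuous_on F N \<and> N ` F \<subseteq> Rn n}.
      wc_err F S N Phi)"

definition manifold_width :: "nat \<Rightarrow> 'a::topological_space set \<Rightarrow> ('a \<Rightarrow> 'b::real_normed_vector) \<Rightarrow> ennreal" where
  "manifold_width n F S = (INF (N, Phi) \<in> {(N, Phi). continuous_on F N \<and> N ` F \<subseteq> Rn n
      \<and> continuous_on (Rn n) Phi}. wc_err F S N Phi)"

end

theory Submission imports Defs begin

lemma modulus:
  fixes F :: "'a::metric_space set" and S :: "'a \<Rightarrow> 'b::real_normed_vector"
    and N :: "'a \<Rightarrow> 'c::metric_space"
  assumes F: "compact F" and S: "continuous_on F S" and N: "continuous_on F N"
    and eq: "\<And>f g. f \<in> F \<Longrightarrow> g \<in> F \<Longrightarrow> N f = N g \<Longrightarrow> norm (S f - S g) \<le> c"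
    and eta: "\<eta> > 0"
  shows "\<exists>\<delta>>0. \<forall>f\<in>F. \<forall>g\<in>F. dist (N f) (N g) < \<delta> \<longrightarrow> norm (S f - S g) \<le> c + \<eta>"
proof -
  define C where "C = (F \<times> F) \<inter> (\<lambda>p. norm (S (fst p) - S (snd p))) -` {c+\<eta>..}"
  have cFF: "compact (F \<times> F)" using F by (simp add: compact_Times)
  have contg: "continuous_on (F \<times> F) (\<lambda>p. norm (S (fst p) - S (snd p)))"
    by (intro continuous_intros continuous_on_compose2[OF S] continuous_on_fst continuous_on_snd) auto
  have "closed C" unfolding C_def
    by (rule continuous_closed_preimage[OF contg]) (auto simp: compact_imp_closed cFF)
  hence cC: "compact C" using cFF unfolding C_def
    by (metis C_def compact_Int_closed inf.absorb2 inf_le1)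
  show ?thesis
  proof (cases "C = {}")
    case True
    show ?thesis
    proof (intro exI[of _ 1] conjI ballI impI)
      fix f g assume "f \<in> F" "g \<in> F"
      hence "(f,g) \<notin> C" using True by auto
      thus "norm (S f - S g) \<le> c + \<eta>" using \<open>f \<in> F\<close> \<open>g \<in> F\<close> unfolding C_def by auto
    qed simp
  next
    case False
    have conth: "continuous_on C (\<lambda>p. dist (N (fst p)) (N (snd p)))"
      by (intro continuous_intros continuous_on_compose2[OF N] continuous_on_fst continuous_on_snd) (auto simp: C_def)
    obtain p0 where p0: "p0 \<in> C" and mn: "\<And>p. p \<in> C \<Longrightarrow> dist (N (fst p0)) (N (snd p0)) \<le> dist (N (fst p)) (N (snd p))"
      using continuous_attains_inf[OF cC False conth] by blast
    have pos: "dist (N (fst p0)) (N (snd p0)) > 0"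
    proof (rule ccontr)
      assume "\<not> ?thesis"
      hence "N (fst p0) = N (snd p0)" by simp
      hence "norm (S (fst p0) - S (snd p0)) \<le> c" using p0 eq[of "fst p0" "snd p0"] by (auto simp: C_def)
      thus False using p0 eta by (auto simp: C_def)
    qed
    show ?thesis
    proof (intro exI[of _ "dist (N (fst p0)) (N (snd p0))"] conjI pos ballI impI)
      fix f g assume fg: "f \<in> F" "g \<in> F" "dist (N f) (N g) < dist (N (fst p0)) (N (snd p0))"
      hence "(f,g) \<notin> C" using mn[of "(f,g)"] by force
      thus "norm (S f - S g) \<le> c + \<eta>" using fg unfolding C_def by auto
    qed
  qed
qed


lemma construct:
  fixes F :: "'a::metric_space set" and S :: "'a \<Rightarrow> 'b::real_normed_vector"
  assumes F: "compact F" and S: "continuous_on F S" and N: "continuous_on F N"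
    and NF: "N ` F \<subseteq> Rn n"
    and err: "\<And>f. f \<in> F \<Longrightarrow> norm (S f - Phi (N f)) \<le> \<epsilon>"
    and eta: "\<eta> > 0"
  shows "manifold_width n F S \<le> ennreal (2*\<epsilon>+\<eta>)"
proof -
  have eq: "norm (S f - S g) \<le> 2*\<epsilon>" if "f \<in> F" "g \<in> F" "N f = N g" for f g
  proof -
    have "norm (S f - S g) \<le> norm (S f - Phi (N f)) + norm (S g - Phi (N g))"
      using that(3) norm_triangle_ineq4[of "S f - Phi (N f)" "S g - Phi (N g)"] by simp
    thus ?thesis using err[OF that(1)] err[OF that(2)] by linarith
  qed
  obtain \<delta> where dpos: "\<delta> > 0" and dmod: "\<And>f g. f\<in>F \<Longrightarrow> g\<in>F \<Longrightarrow> dist (N f) (N g) < \<delta> \<Longrightarrow> norm (S f - S g) \<le> 2*\<epsilon> + \<eta>"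
    using modulus[OF F S N eq eta] by blast
  have K: "compact (N ` F)" using compact_continuous_image[OF N F] .
  obtain k where k: "finite k" "k \<subseteq> N ` F" "N ` F \<subseteq> (\<Union>x\<in>k. ball x (\<delta>/2))"
    using seq_compact_imp_totally_bounded[OF compact_imp_seq_compact[OF K]] dpos
    by (metis half_gt_zero)
  define v where "v y = S (SOME f. f\<in>F \<and> N f = y)" for y
  have vprop: "\<exists>g\<in>F. N g = y \<and> v y = S g" if "y \<in> k" for y
  proof -
    have "\<exists>f. f\<in>F \<and> N f = y" using that k(2) by auto
    hence "(SOME f. f\<in>F \<and> N f = y) \<in> F \<and> N (SOME f. f\<in>F \<and> N f = y) = y" by (rule someI_ex)
    thus ?thesis unfolding v_def by blast
  qed
  define \<phi> where "\<phi> y x = max 0 (\<delta> - dist x y)" for y x :: "nat \<Rightarrow> real"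
  define P where "P x = inverse (max (\<Sum>y\<in>k. \<phi> y x) (\<delta>/2)) *\<^sub>R (\<Sum>y\<in>k. \<phi> y x *\<^sub>R v y)" for x
  have contP: "continuous_on (Rn n) P"
  proof -
    have "continuous_on UNIV P" unfolding P_def \<phi>_def
      by (intro continuous_intros continuous_on_max continuous_on_inverse) (use dpos in auto)
    thus ?thesis using continuous_on_subset by blast
  qed
  have "manifold_width n F S \<le> (case (N,P) of (N, Phi) \<Rightarrow> wc_err F S N Phi)"
    unfolding manifold_width_def by (rule INF_lower) (use N NF contP in auto)
  also have "\<dots> = wc_err F S N P" by simp
  also have "\<dots> \<le> ennreal (2*\<epsilon>+\<eta>)" unfolding wc_err_def
  proof (rule SUP_least, rule ennreal_leI)
    fix f assume f: "f \<in> F"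
    define x where "x = N f"
    define s where "s = (\<Sum>y\<in>k. \<phi> y x)"
    have phinn: "\<phi> y x \<ge> 0" for y unfolding \<phi>_def by simp
    obtain y0 where y0: "y0 \<in> k" "dist x y0 < \<delta>/2"
      using k(3) f unfolding x_def by (force simp: dist_commute)
    have "\<delta>/2 \<le> \<phi> y0 x" using y0 unfolding \<phi>_def by (auto simp: max_def)
    also have "\<dots> \<le> s" unfolding s_def by (rule member_le_sum) (use y0 k phinn in auto)
    finally have sge: "\<delta>/2 \<le> s" .
    hence spos: "s > 0" using dpos by simp
    have Px: "P x = inverse s *\<^sub>R (\<Sum>y\<in>k. \<phi> y x *\<^sub>R v y)"
      unfolding P_def s_def[symmetric] using sge by (simp add: max_def)
    have "S f = inverse s *\<^sub>R (s *\<^sub>R S f)" using spos by simp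
    also have "s *\<^sub>R S f = (\<Sum>y\<in>k. \<phi> y x *\<^sub>R S f)" unfolding s_def by (simp add: scaleR_sum_left)
    finally have "S f - P x = inverse s *\<^sub>R (\<Sum>y\<in>k. \<phi> y x *\<^sub>R S f) - inverse s *\<^sub>R (\<Sum>y\<in>k. \<phi> y x *\<^sub>R v y)"
      unfolding Px by simp
    also have "\<dots> = inverse s *\<^sub>R (\<Sum>y\<in>k. \<phi> y x *\<^sub>R (S f - v y))"
      by (simp add: scaleR_diff_right sum_subtractf)
    finally have "S f - P x = inverse s *\<^sub>R (\<Sum>y\<in>k. \<phi> y x *\<^sub>R (S f - v y))" .
    hence "norm (S f - P x) \<le> inverse s * (\<Sum>y\<in>k. norm (\<phi> y x *\<^sub>R (S f - v y)))"
      using spos mult_left_mono[OF norm_sum[of "\<lambda>y. \<phi> y x *\<^sub>R (S f - v y)" k], of "inverse s"]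
      by simp
    also have "\<dots> \<le> inverse s * (\<Sum>y\<in>k. \<phi> y x * (2*\<epsilon>+\<eta>))"
    proof (intro mult_left_mono sum_mono)
      fix y assume y: "y \<in> k"
      show "norm (\<phi> y x *\<^sub>R (S f - v y)) \<le> \<phi> y x * (2*\<epsilon>+\<eta>)"
      proof (cases "\<phi> y x = 0")
        case True thus ?thesis by simp
      next
        case False
        hence "dist x y < \<delta>" unfolding \<phi>_def by (auto simp: max_def split: if_splits)
        then obtain g where g: "g \<in> F" "N g = y" "v y = S g" "dist (N f) (N g) < \<delta>"
          using vprop[OF y] unfolding x_def by auto
        have "norm (S f - v y) \<le> 2*\<epsilon>+\<eta>" using dmod[OF f g(1) g(4)] g(3) by simp
        thus ?thesis using phinn[of y] by (simp add: mult_left_mono)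
      qed
    qed (use spos in simp)
    also have "\<dots> = 2*\<epsilon>+\<eta>" using spos unfolding s_def[symmetric] sum_distrib_right[symmetric]
      by (simp add: s_def)
    finally show "norm (S f - P (N f)) \<le> 2*\<epsilon>+\<eta>" unfolding x_def .
  qed
  finally show ?thesis .
qed

lemma step:
  fixes F :: "'a::metric_space set" and S :: "'a \<Rightarrow> 'b::real_normed_vector"
  assumes F: "compact F" and S: "continuous_on F S" and N: "continuous_on F N"
    and NF: "N ` F \<subseteq> Rn n"
  shows "manifold_width n F S \<le> 2 * wc_err F S N Phi"
proof (cases "wc_err F S N Phi" rule: ennreal_cases)
  case (real \<epsilon>)
  have err: "norm (S f - Phi (N f)) \<le> \<epsilon>" if "f \<in> F" for f
  proof -
    have "ennreal (norm (S f - Phi (N f))) \<le> wc_err F S N Phi"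
      unfolding wc_err_def using that by (rule SUP_upper)
    thus ?thesis using real by (simp add: ennreal_le_iff)
  qed
  have "manifold_width n F S \<le> ennreal (2*\<epsilon>) + ennreal e" if "0 < e" for e
  proof -
    have "manifold_width n F S \<le> ennreal (2*\<epsilon>+e)" by (rule construct[OF F S N NF err that])
    also have "\<dots> = ennreal (2*\<epsilon>) + ennreal e" using real that by (intro ennreal_plus) auto
    finally show ?thesis .
  qed
  hence "manifold_width n F S \<le> ennreal (2*\<epsilon>)" by (rule ennreal_le_epsilon)
  also have "\<dots> = ennreal 2 * ennreal \<epsilon>" using real by (intro ennreal_mult) auto
  also have "\<dots> = 2 * wc_err F S N Phi" using real by simp
  finally show ?thesis .
next
  case top
  thus ?thesis by simp
qed

theorem mainTheorem4:
  fixes F :: "'a::metric_space set" and S :: "'a \<Rightarrow> 'b::real_normed_vector" and n :: nat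
  assumes "compact F" and "continuous_on F S"
  shows "manifold_width n F S \<le> 2 * e_cont_non n F S"
proof (cases "e_cont_non n F S = \<infinity>")
  case True
  thus ?thesis by simp
next
  case False
  show ?thesis
  proof (rule ennreal_le_epsilon)
    fix e :: real assume e: "0 < e"
    have "\<exists>i\<in>{(N, Phi). continuous_on F N \<and> N ` F \<subseteq> Rn n}. (case i of (N, Phi) \<Rightarrow> wc_err F S N Phi) < e_cont_non n F S + ennreal (e/2)"
      by (rule INF_approx_ennreal) (use e False in \<open>auto simp: e_cont_non_def\<close>)
    then obtain N Phi where NP: "continuous_on F N" "N ` F \<subseteq> Rn n"
      and lt: "wc_err F S N Phi < e_cont_non n F S + ennreal (e/2)" by auto
    have "manifold_width n F S \<le> 2 * wc_err F S N Phi" by (rule step[OF assms NP])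
    also have "\<dots> \<le> 2 * (e_cont_non n F S + ennreal (e/2))" using lt by (intro mult_left_mono) auto
    also have "\<dots> = 2 * e_cont_non n F S + ennreal e"
    proof -
      have "ennreal e = ennreal 2 * ennreal (e/2)" using e by (subst ennreal_mult[symmetric]) auto
      thus ?thesis by (simp add: distrib_left)
    qed
    finally show "manifold_width n F S \<le> 2 * e_cont_non n F S + ennreal e" .
  qed
qed

end
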